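(* The group $\mathrm{Aut}(\mathcal{M}(2;\mathbb{C});\Phi_{\mathrm{Id}})$ of holomorphic automorphisms of $\mathcal{M}(2;\mathbb{C})$ commuting with $\Phi_{\mathrm{Id}}\colon \mathrm{M}\mapsto \mathrm{M}^2$ is generated by the transposition $\mathcal{T}\colon \mathrm{M}\mapsto {}^t\mathrm{M}$ and the maps $\sigma_{\mathrm{P}}\colon \mathrm{M}\mapsto \mathrm{P}\mathrm{M}\mathrm{P}^{-1}$, $\mathrm{P}\in\mathrm{GL}(2;\mathbb{C})$. More precisely, $\mathrm{Aut}(\mathcal{M}(2;\mathbb{C});\Phi_{\mathrm{Id}})\simeq \mathrm{PGL}(2;\mathbb{C})\rtimes\mathbb{Z}/2\mathbb{Z}$.
   Context: $\mathcal{M}(2;\mathbb{C})\simeq\mathbb{C}^4$ is the space of complex $2\times 2$ matrices. For a map $f\colon X\to X$, $\mathrm{Aut}(X;f)$ denotes the group of holomorphic automorphisms $g$ of $X$ with $g\circ f=f\circ g$. *)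

theory Defs
  imports "HOL-Analysis.Analysis"
begin

type_synonym mat2 = "complex^2^2"

definition cscale :: "complex \<Rightarrow> mat2 \<Rightarrow> mat2" where
  "cscale c A = (\<chi> i j. c * A $ i $ j)"

definition complex_linear :: "(mat2 \<Rightarrow> mat2) \<Rightarrow> bool" where
  "complex_linear L \<longleftrightarrow> linear L \<and> (\<forall>c A. L (cscale c A) = cscale c (L A))"

definition holo_mat :: "(mat2 \<Rightarrow> mat2) \<Rightarrow> bool" where
  "holo_mat f \<longleftrightarrow> (\<forall>x. \<exists>L. complex_linear L \<and> (f has_derivative L) (at x))"

definition holo_aut :: "(mat2 \<Rightarrow> mat2) \<Rightarrow> bool" where
  "holo_aut g \<longleftrightarrow> bij g \<and> holo_mat g \<and> holo_mat (inv g)"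

definition Phi_Id :: "mat2 \<Rightarrow> mat2" where
  "Phi_Id M = M ** M"

definition Aut_Phi :: "(mat2 \<Rightarrow> mat2) set" where
  "Aut_Phi = {g. holo_aut g \<and> g \<circ> Phi_Id = Phi_Id \<circ> g}"

definition transp_map :: "mat2 \<Rightarrow> mat2" where
  "transp_map M = transpose M"

definition sigma :: "mat2 \<Rightarrow> mat2 \<Rightarrow> mat2" where
  "sigma P M = P ** M ** matrix_inv P"

end

theory Submission
  imports Defs "HOL-Complex_Analysis.Complex_Analysis"
begin
unbundle no Formal_Power_Series.fps_syntax

lemmas m2s = matrix_matrix_mult_def sum_2 vec_eq_iff forall_2 mat_def transpose_def cscale_def

lemma minv: assumes "invertible (P::mat2)"
  shows "P ** matrix_inv P = mat 1" "matrix_inv P ** P = mat 1"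
proof -
  from assms obtain A' where "P ** A' = mat 1 \<and> A' ** P = mat 1" unfolding invertible_def by blast
  hence "P ** matrix_inv P = mat 1 \<and> matrix_inv P ** P = mat 1"
    unfolding matrix_inv_def by (rule someI)
  thus "P ** matrix_inv P = mat 1" "matrix_inv P ** P = mat 1" by auto
qed

lemma scR: "(r *\<^sub>R (A::mat2)) $ i $ j = complex_of_real r * A $ i $ j"
  by (simp only: vector_scaleR_component) (simp add: scaleR_conv_of_real)

lemma cl_I:
  assumes "\<And>A B. L (A + B) = L A + L B" "\<And>c A. L (cscale c A) = cscale c (L A)"
  shows "complex_linear L"
proof -
  have "r *\<^sub>R A = cscale (complex_of_real r) A" for r A
    by (simp only: vec_eq_iff cscale_def scR vec_lambda_beta) simp
  hence "L (r *\<^sub>R A) = r *\<^sub>R L A" for r A using assms(2) by simp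
  thus ?thesis unfolding complex_linear_def using assms by (auto intro: linearI)
qed

lemma cl_holo: assumes "complex_linear L" shows "holo_mat L"
proof -
  have "linear L" using assms complex_linear_def by blast
  hence "bounded_linear L" using linear_conv_bounded_linear by blast
  hence "(L has_derivative L) (at x)" for x by (rule bounded_linear_imp_has_derivative)
  thus ?thesis using assms unfolding holo_mat_def by blast
qed

lemma cl_comp: "complex_linear L \<Longrightarrow> complex_linear K \<Longrightarrow> complex_linear (L \<circ> K)"
  unfolding complex_linear_def by (auto intro: linear_compose)

lemma cl_sandwich: "complex_linear (\<lambda>M. A ** M ** B)"
  by (rule cl_I) (simp_all add: m2s algebra_simps)

lemma cl_transp: "complex_linear transp_map"
  by (rule cl_I) (simp_all add: m2s transp_map_def algebra_simps)

lemma in_AutI: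
  assumes "complex_linear L" "complex_linear K" "L \<circ> K = id" "K \<circ> L = id"
    "\<And>M. L (M ** M) = L M ** L M"
  shows "L \<in> Aut_Phi"
proof -
  have b: "bij L" using assms(3,4) o_bij by blast
  have "inv L = K" using assms(3,4) inv_unique_comp by blast
  hence h: "holo_mat (inv L)" using cl_holo[OF assms(2)] by simp
  show ?thesis using assms b cl_holo h unfolding Aut_Phi_def holo_aut_def Phi_Id_def
    by (auto simp: fun_eq_iff)
qed

lemma sigma_in: assumes "invertible P" shows "sigma P \<in> Aut_Phi"
proof -
  note i = minv[OF assms]
  have e: "sigma P = (\<lambda>M. P ** M ** matrix_inv P)" by (simp add: sigma_def fun_eq_iff)
  show ?thesis unfolding e
  proof (rule in_AutI[OF cl_sandwich cl_sandwich[of "matrix_inv P" P]])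
    show "(\<lambda>M. P ** M ** matrix_inv P) \<circ> (\<lambda>M. matrix_inv P ** M ** P) = id"
      by (simp add: fun_eq_iff matrix_mul_assoc i) (simp add: i flip: matrix_mul_assoc)
    show "(\<lambda>M. matrix_inv P ** M ** P) \<circ> (\<lambda>M. P ** M ** matrix_inv P) = id"
      by (simp add: fun_eq_iff matrix_mul_assoc i) (simp add: i flip: matrix_mul_assoc)
    fix M :: mat2
    have "P ** M ** matrix_inv P ** (P ** M ** matrix_inv P) = P ** M ** (matrix_inv P ** P) ** M ** matrix_inv P"
      by (simp add: matrix_mul_assoc)
    thus "P ** (M ** M) ** matrix_inv P = P ** M ** matrix_inv P ** (P ** M ** matrix_inv P)"
      by (simp add: i matrix_mul_assoc)
  qed
qed

lemma sigmaT_in: assumes "invertible P" shows "sigma P \<circ> transp_map \<in> Aut_Phi"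
proof -
  note i = minv[OF assms]
  have e: "sigma P \<circ> transp_map = (\<lambda>M. P ** M ** matrix_inv P) \<circ> transp_map" by (simp add: sigma_def fun_eq_iff)
  have tt: "transp_map \<circ> transp_map = id" by (simp add: fun_eq_iff transp_map_def)
  show ?thesis unfolding e
  proof (rule in_AutI[OF cl_comp[OF cl_sandwich cl_transp] cl_comp[OF cl_transp cl_sandwich[of "matrix_inv P" P]]])
    show "(\<lambda>M. P ** M ** matrix_inv P) \<circ> transp_map \<circ> (transp_map \<circ> (\<lambda>M. matrix_inv P ** M ** P)) = id"
      by (simp add: fun_eq_iff matrix_mul_assoc i transp_map_def) (simp add: i flip: matrix_mul_assoc)
    show "transp_map \<circ> (\<lambda>M. matrix_inv P ** M ** P) \<circ> ((\<lambda>M. P ** M ** matrix_inv P) \<circ> transp_map) = id"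
      by (simp add: fun_eq_iff matrix_mul_assoc i transp_map_def) (simp add: i flip: matrix_mul_assoc)
    fix M :: mat2
    have "P ** transpose M ** matrix_inv P ** (P ** transpose M ** matrix_inv P) = P ** transpose M ** (matrix_inv P ** P) ** transpose M ** matrix_inv P"
      by (simp add: matrix_mul_assoc)
    thus "((\<lambda>M. P ** M ** matrix_inv P) \<circ> transp_map) (M ** M) =
         ((\<lambda>M. P ** M ** matrix_inv P) \<circ> transp_map) M ** ((\<lambda>M. P ** M ** matrix_inv P) \<circ> transp_map) M"
      by (simp add: i matrix_mul_assoc transp_map_def matrix_transpose_mul)
  qed
qed

lemma sigma_id_iff: assumes "invertible P"
  shows "sigma P = id \<longleftrightarrow> (\<exists>c. c \<noteq> 0 \<and> P = cscale c (mat 1))"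
proof
  note i = minv[OF assms]
  assume s: "sigma P = id"
  have comm: "P ** M = M ** P" for M
  proof -
    have "P ** M ** matrix_inv P = M" using s by (simp add: sigma_def fun_eq_iff)
    hence "P ** M ** matrix_inv P ** P = M ** P" by simp
    thus ?thesis by (metis matrix_mul_assoc i(2) matrix_mul_rid)
  qed
  define c where "c = P$1$1"
  have a: "P ** (mat 1 :: mat2) = P" by simp
  have E12: "P ** (\<chi> i j. if i = 1 \<and> j = 2 then 1 else 0) = (\<chi> i j. if i = 1 \<and> j = 2 then 1 else 0) ** P" by (rule comm)
  have E21: "P ** (\<chi> i j. if i = 2 \<and> j = 1 then 1 else 0) = (\<chi> i j. if i = 2 \<and> j = 1 then 1 else 0) ** P" by (rule comm)
  have P: "P = cscale c (mat 1)" using E12 E21 by (auto simp: m2s c_def)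
  have "c \<noteq> 0"
  proof
    assume "c = 0"
    hence "P = 0" using P by (simp add: m2s)
    hence "P ** matrix_inv P = 0" by simp
    thus False using i(1) by (simp add: m2s)
  qed
  thus "\<exists>c. c \<noteq> 0 \<and> P = cscale c (mat 1)" using P by blast
next
  note i = minv[OF assms]
  assume "\<exists>c. c \<noteq> 0 \<and> P = cscale c (mat 1)"
  then obtain c where P: "P = cscale c (mat 1)" by blast
  have comm: "P ** M = M ** P" for M :: mat2 unfolding P by (simp add: m2s algebra_simps)
  show "sigma P = id" by (auto simp: sigma_def fun_eq_iff comm i matrix_mul_assoc simp flip: matrix_mul_assoc)
qed

lemma transp_ne: assumes "invertible P" shows "transp_map \<noteq> sigma P"
proof
  note i = minv[OF assms]
  assume s: "transp_map = sigma P"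
  have t: "transpose M = P ** M ** matrix_inv P" for M using s by (simp add: fun_eq_iff transp_map_def sigma_def)
  have "transpose (M ** N) = transpose M ** transpose N" for M N :: mat2
  proof -
    have "P ** M ** matrix_inv P ** (P ** N ** matrix_inv P) = P ** M ** (matrix_inv P ** P) ** N ** matrix_inv P"
      by (simp add: matrix_mul_assoc)
    thus ?thesis by (simp add: t i matrix_mul_assoc)
  qed
  hence "transpose N ** transpose M = transpose M ** transpose N" for M N :: mat2
    by (simp add: matrix_transpose_mul)
  from this[of "\<chi> i j. if i = 1 \<and> j = 2 then 1 else 0" "\<chi> i j. if i = 2 \<and> j = 1 then 1 else 0"]
  show False by (simp add: m2s)
qed

definition E11 :: mat2 where "E11 = (\<chi> i j. if i = 1 \<and> j = 1 then 1 else 0)"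
definition E12 :: mat2 where "E12 = (\<chi> i j. if i = 1 \<and> j = 2 then 1 else 0)"
definition E21 :: mat2 where "E21 = (\<chi> i j. if i = 2 \<and> j = 1 then 1 else 0)"
definition E22 :: mat2 where "E22 = (\<chi> i j. if i = 2 \<and> j = 2 then 1 else 0)"
lemmas Es = E11_def E12_def E21_def E22_def

definition det2 :: "mat2 \<Rightarrow> complex" where "det2 A = A$1$1 * A$2$2 - A$1$2 * A$2$1"
definition tr2 :: "mat2 \<Rightarrow> complex" where "tr2 A = A$1$1 + A$2$2"

lemma mat2_decomp: "A = cscale (A$1$1) E11 + cscale (A$1$2) E12 + cscale (A$2$1) E21 + cscale (A$2$2) E22"
  by (simp add: m2s Es)

lemma cl_add: "complex_linear L \<Longrightarrow> L (A + B) = L A + L B"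
  unfolding complex_linear_def by (simp add: linear_add)
lemma cl_diff: "complex_linear L \<Longrightarrow> L (A - B) = L A - L B"
  unfolding complex_linear_def by (simp add: linear_diff)
lemma cl_scale: "complex_linear L \<Longrightarrow> L (cscale c A) = cscale c (L A)"
  unfolding complex_linear_def by simp
lemma cl_zero: "complex_linear L \<Longrightarrow> L 0 = 0"
  unfolding complex_linear_def by (simp add: linear_0)

lemma basis_ext:
  assumes "complex_linear L" "complex_linear K"
    "L E11 = K E11" "L E12 = K E12" "L E21 = K E21" "L E22 = K E22"
  shows "L = K"
proof
  fix A
  show "L A = K A"
    by (subst (1 2) mat2_decomp) (simp add: cl_add[OF assms(1)] cl_add[OF assms(2)] cl_scale[OF assms(1)] cl_scale[OF assms(2)] assms(3-6))
qed

lemma inv2: assumes "det2 P \<noteq> 0" shows "invertible P"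
proof -
  define d where "d = det2 P"
  define A :: mat2 where "A = (\<chi> i j. if i = 1 \<and> j = 1 then P$2$2 else if i = 1 \<and> j = 2 then -P$1$2
        else if i = 2 \<and> j = 1 then -P$2$1 else P$1$1)"
  have d: "d \<noteq> 0" using assms d_def by simp
  have 1: "P ** A = cscale d (mat 1)" "A ** P = cscale d (mat 1)" unfolding A_def d_def det2_def
    by (simp_all add: m2s algebra_simps)
  have 2: "P ** cscale (1/d) A = cscale (1/d) (P ** A)" "cscale (1/d) A ** P = cscale (1/d) (A ** P)"
    by (simp_all add: m2s algebra_simps)
  have 3: "cscale (1/d) (cscale d (mat 1)) = (mat 1 :: mat2)" using d by (simp add: m2s)
  have "P ** cscale (1/d) A = mat 1" "cscale (1/d) A ** P = mat 1" using 1 2 3 by simp_all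
  thus ?thesis unfolding invertible_def by blast
qed

lemma sigma_eqI: assumes "invertible P" "P ** E = X ** P" shows "sigma P E = X"
proof -
  have "sigma P E = X ** P ** matrix_inv P" using assms(2) by (simp add: sigma_def)
  also have "\<dots> = X" by (metis matrix_mul_assoc minv(1)[OF assms(1)] matrix_mul_rid)
  finally show ?thesis .
qed

lemma mvs: "(A::mat2) *v (v::complex^2) = (\<chi> i. A$i$1 * v$1 + A$i$2 * v$2)"
  by (simp add: matrix_vector_mult_def sum_2)

lemma mv_smult: "(A::mat2) *v (c *s v) = c *s (A *v v)"
  by (simp add: vec_eq_iff mvs algebra_simps)

lemma construct:
  fixes e x y :: mat2 and p :: "complex^2"
  assumes ee: "e ** e = e" and xx: "x ** x = 0" and yy: "y ** y = 0"
    and ey: "e ** y + y ** e = y" and xy: "x ** y + y ** x = mat 1"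
    and p0: "p \<noteq> 0" and ep: "e *v p = p" and xp: "x *v p = 0"
  shows "\<exists>P. invertible P \<and> P ** E11 = e ** P \<and> P ** E12 = x ** P \<and> P ** E21 = y ** P"
proof -
  define q where "q = y *v p"
  define P :: mat2 where "P = (\<chi> i j. if j = 1 then p$i else q$i)"
  have eye: "e ** y ** e = 0"
  proof -
    have "e ** (e ** y + y ** e) = e ** y" using ey by simp
    hence "e ** e ** y + e ** y ** e = e ** y" by (simp add: matrix_add_ldistrib matrix_mul_assoc)
    hence "e ** y + e ** y ** e = e ** y" using ee by simp
    thus ?thesis by (metis add_cancel_right_right)
  qed
  have eq: "e *v q = 0"
  proof -
    have "e *v q = (e ** y ** e) *v p" unfolding q_def by (metis matrix_vector_mul_assoc ep)
    thus ?thesis using eye by simp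
  qed
  have xq: "x *v q = p"
  proof -
    have "x *v q = (x ** y) *v p" unfolding q_def by (simp add: matrix_vector_mul_assoc)
    also have "x ** y = mat 1 - y ** x" using xy by (simp add: algebra_simps)
    also have "(mat 1 - y ** x) *v p = p" by (simp add: matrix_vector_mult_diff_rdistrib xp flip: matrix_vector_mul_assoc)
    finally show ?thesis .
  qed
  have yq: "y *v q = 0" unfolding q_def by (simp add: matrix_vector_mul_assoc yy)
  have det: "det2 P \<noteq> 0"
  proof
    assume "det2 P = 0"
    hence d: "p$1 * q$2 = p$2 * q$1" by (simp add: det2_def P_def)
    have s1: "p$1 *s q = q$1 *s p" using d by (simp add: vec_eq_iff forall_2 mult.commute)
    have s2: "p$2 *s q = q$2 *s p" using d by (simp add: vec_eq_iff forall_2 mult.commute)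
    have "x *v (p$1 *s q) = p$1 *s p" by (simp add: mv_smult xq)
    moreover have "x *v (q$1 *s p) = 0" by (simp add: mv_smult xp)
    ultimately have "p$1 *s p = 0" using s1 by simp
    hence a: "p$1 = 0" by (auto simp: vec_eq_iff)
    have "x *v (p$2 *s q) = p$2 *s p" by (simp add: mv_smult xq)
    moreover have "x *v (q$2 *s p) = 0" by (simp add: mv_smult xp)
    ultimately have "p$2 *s p = 0" using s2 by simp
    hence "p$2 = 0" by (auto simp: vec_eq_iff)
    with a p0 show False by (simp add: vec_eq_iff forall_2)
  qed
  have col: "A = B" if "\<And>i. A$i$1 = B$i$1" "\<And>i. A$i$2 = B$i$2" for A B :: mat2
    using that by (simp add: vec_eq_iff forall_2)
  have cP: "(A ** P)$i$1 = (A *v p)$i" "(A ** P)$i$2 = (A *v q)$i" for A :: mat2 and i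
    by (simp_all add: matrix_matrix_mult_def matrix_vector_mult_def sum_2 P_def)
  have PE: "(P ** E11)$i$1 = p$i" "(P ** E11)$i$2 = 0" "(P ** E12)$i$1 = 0" "(P ** E12)$i$2 = p$i"
     "(P ** E21)$i$1 = q$i" "(P ** E21)$i$2 = 0" for i
    by (simp_all add: matrix_matrix_mult_def sum_2 Es P_def)
  have "P ** E11 = e ** P" by (rule col) (simp_all add: PE cP ep eq)
  moreover have "P ** E12 = x ** P" by (rule col) (simp_all add: PE cP xp xq)
  moreover have "P ** E21 = y ** P" by (rule col) (simp_all add: PE cP yq, simp add: q_def)
  ultimately show ?thesis using inv2[OF det] by blast
qed


lemma cs_mult: "cscale c A ** B = cscale c (A ** B)" "A ** cscale c B = cscale c (A ** B)"
  "cscale c (cscale d A) = cscale (c*d) A" "cscale c (A - B) = cscale c A - cscale c B"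
  "cscale c (A + B) = cscale c A + cscale c B" "cscale c 0 = 0"
  by (simp_all add: m2s algebra_simps)

lemma madd: "(A + B) ** C = A ** C + B ** (C::mat2)"
  by (simp add: m2s algebra_simps)

lemma mdiff: "(A - B) ** C = A ** C - B ** (C::mat2)" "C ** (A - B) = C ** A - C ** (B::mat2)"
  by (simp_all add: m2s algebra_simps)

lemma mv_cs: "cscale c A *v v = c *s (A *v v)" "(A - B) *v v = A *v v - B *v v"
  by (simp_all add: vec_eq_iff mvs algebra_simps cscale_def)

lemma ker1:
  fixes e :: mat2 and u w :: "complex^2"
  assumes "e *v u = 0" "e *v w = 0" "u \<noteq> 0" "e \<noteq> 0"
  shows "\<exists>c. w = c *s u"
proof (rule ccontr)
  assume nc: "\<not> (\<exists>c. w = c *s u)"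
  define d where "d = u$1 * w$2 - u$2 * w$1"
  have d: "d \<noteq> 0"
  proof
    assume d0: "d = 0"
    show False
    proof (cases "u$1 = 0")
      case True
      hence u2: "u$2 \<noteq> 0" using assms(3) by (auto simp: vec_eq_iff forall_2)
      hence w1: "w$1 = 0" using d0 True by (simp add: d_def)
      have "w = (w$2/u$2) *s u" using True u2 w1 by (simp add: vec_eq_iff forall_2)
      thus False using nc by blast
    next
      case False
      have e2: "w$2 = w$1 * u$2 / u$1" using False d0 unfolding d_def
        by (metis (no_types, lifting) eq_divide_eq mult.commute right_minus_eq)
      have "w = (w$1/u$1) *s u" using False e2 by (simp add: vec_eq_iff forall_2)
      thus False using nc by blast
    qed
  qed
  have h: "e$i$1 * u$1 + e$i$2 * u$2 = 0" "e$i$1 * w$1 + e$i$2 * w$2 = 0" for i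
    using assms(1,2) by (simp_all add: vec_eq_iff mvs)
  have a: "e$i$1 = 0" for i
  proof -
    have "e$i$1 * d = (e$i$1 * u$1 + e$i$2 * u$2) * w$2 - (e$i$1 * w$1 + e$i$2 * w$2) * u$2"
      unfolding d_def by (simp add: algebra_simps)
    hence "e$i$1 * d = 0" using h[of i] by simp
    thus ?thesis using d by simp
  qed
  have b: "e$i$2 = 0" for i
  proof -
    have "e$i$2 * d = (e$i$1 * w$1 + e$i$2 * w$2) * u$1 - (e$i$1 * u$1 + e$i$2 * u$2) * w$1"
      unfolding d_def by (simp add: algebra_simps)
    hence "e$i$2 * d = 0" using h[of i] by simp
    thus ?thesis using d by simp
  qed
  have "e = 0" using a b by (simp add: vec_eq_iff forall_2)
  thus False using assms(4) by simp
qed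

lemma jordan_class:
  assumes cl: "complex_linear L" and b: "bij L" and J: "\<And>M. L (M ** M) = L M ** L M"
  shows "\<exists>P. invertible P \<and> (L = sigma P \<or> L = sigma P \<circ> transp_map)"
proof -
  note add = cl_add[OF cl] and diff = cl_diff[OF cl]
  have polar: "L (A ** B + B ** A) = L A ** L B + L B ** L A" for A B
  proof -
    have "L ((A + B) ** (A + B)) = L (A + B) ** L (A + B)" by (rule J)
    thus ?thesis by (simp add: matrix_add_ldistrib madd add J algebra_simps)
  qed
  have one: "L (mat 1) = mat 1"
  proof -
    obtain A where A: "L A = mat 1" using b by (metis bij_pointE)
    have "L (A ** mat 1 + mat 1 ** A) = L A ** L (mat 1) + L (mat 1) ** L A" by (rule polar)
    hence "L (A + A) = L (mat 1) + L (mat 1)" by (simp only: matrix_mul_rid matrix_mul_lid A)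
    hence "mat 1 + mat 1 = L (mat 1) + (L (mat 1) :: mat2)" by (simp only: add A)
    hence "\<forall>i j. (mat 1 :: mat2)$i$j + mat 1$i$j = L (mat 1)$i$j + L (mat 1)$i$j" by (simp add: vec_eq_iff)
    thus ?thesis by (simp add: vec_eq_iff)
  qed
  define e where "e = L E11"
  define x where "x = L E12"
  define y where "y = L E21"
  have prods: "E11 ** E11 = E11" "E12 ** E12 = 0" "E21 ** E21 = 0" "E11 ** E12 + E12 ** E11 = E12"
    "E11 ** E21 + E21 ** E11 = E21" "E12 ** E21 + E21 ** E12 = mat 1" "E22 = mat 1 - E11"
    by (simp_all add: m2s Es)
  have L0: "L 0 = 0" by (rule cl_zero[OF cl])
  have ee: "e ** e = e" unfolding e_def using J[of E11] prods(1) by simp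
  have xx: "x ** x = 0" unfolding x_def using J[of E12] prods(2) L0 by simp
  have yy: "y ** y = 0" unfolding y_def using J[of E21] prods(3) L0 by simp
  have ex: "e ** x + x ** e = x" unfolding e_def x_def using polar[of E11 E12] prods(4) by simp
  have ey: "e ** y + y ** e = y" unfolding e_def y_def using polar[of E11 E21] prods(5) by simp
  have xy: "x ** y + y ** x = mat 1" unfolding y_def x_def using polar[of E12 E21] prods(6) one by simp
  have e22: "L E22 = mat 1 - e" unfolding e_def by (simp only: prods(7) diff one)
  have e0: "e \<noteq> 0"
  proof
    assume "e = 0"
    hence "L E11 = L 0" using L0 e_def by simp
    hence "E11 = 0" using b by (simp add: bij_def inj_eq)
    hence "E11$1$1 = 0" by simp
    thus False by (simp add: Es)
  qed
  obtain n where n: "e *v n \<noteq> 0"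
  proof (rule ccontr)
    assume "\<not> thesis"
    hence z: "e *v n = 0" for n using that by blast
    have "e$i$1 = 0" for i using z[of "\<chi> k. if k = 1 then 1 else 0"] by (simp add: vec_eq_iff mvs)
    moreover have "e$i$2 = 0" for i using z[of "\<chi> k. if k = 2 then 1 else 0"] by (simp add: vec_eq_iff mvs)
    ultimately have "e = 0" by (simp add: vec_eq_iff forall_2)
    thus False using e0 by simp
  qed
  define p where "p = e *v n"
  have p0: "p \<noteq> 0" using n p_def by simp
  have ep: "e *v p = p" unfolding p_def by (simp add: matrix_vector_mul_assoc ee)
  have kill: "e ** z ** e = 0" if "e ** z + z ** e = z" for z
  proof -
    have "e ** (e ** z + z ** e) = e ** z" using that by simp
    hence "e ** e ** z + e ** z ** e = e ** z" by (simp add: matrix_add_ldistrib matrix_mul_assoc)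
    hence "e ** z + e ** z ** e = e ** z" using ee by simp
    thus ?thesis by (metis add_cancel_right_right)
  qed
  have ek: "e *v (z *v p) = 0" if "e ** z + z ** e = z" for z
  proof -
    have "e *v (z *v p) = (e ** z ** e) *v p" by (metis matrix_vector_mul_assoc ep)
    thus ?thesis using kill[OF that] by simp
  qed
  have disj: "x *v p = 0 \<or> y *v p = 0"
  proof (rule ccontr)
    assume "\<not> ?thesis"
    hence u0: "x *v p \<noteq> 0" and w0: "y *v p \<noteq> 0" by auto
    obtain c where c: "y *v p = c *s (x *v p)" using ker1[OF ek[OF ex] ek[OF ey] u0 e0] by blast
    define z where "z = y - cscale c x"
    have zp: "z *v p = 0" unfolding z_def by (simp add: mv_cs c)
    have "z ** z = y ** y - cscale c (x ** y + y ** x) + cscale (c*c) (x ** x)"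
      unfolding z_def by (simp add: mdiff cs_mult matrix_add_ldistrib madd algebra_simps)
    hence zz: "z ** z = cscale (-c) (mat 1)" using xx yy xy by (simp add: m2s)
    have "(z ** z) *v p = 0" by (simp flip: matrix_vector_mul_assoc add: zp)
    hence "(-c) *s p = 0" by (simp add: zz mv_cs)
    hence "c = 0" using p0 by (auto simp: vec_eq_iff)
    thus False using c w0 by simp
  qed
  have clS: "complex_linear (sigma P)" for P
  proof -
    have "sigma P = (\<lambda>M. P ** M ** matrix_inv P)" by (simp add: fun_eq_iff sigma_def)
    thus ?thesis using cl_sandwich by simp
  qed
  have s22: "sigma P E22 = mat 1 - e" if "invertible P" "P ** E11 = e ** P" for P
  proof (rule sigma_eqI[OF that(1)])
    show "P ** E22 = (mat 1 - e) ** P" using that(2) by (simp add: prods(7) mdiff)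
  qed
  show ?thesis using disj
  proof
    assume xp: "x *v p = 0"
    obtain P where P: "invertible P" "P ** E11 = e ** P" "P ** E12 = x ** P" "P ** E21 = y ** P"
      using construct[OF ee xx yy ey xy p0 ep xp] by blast
    have "L = sigma P"
      by (rule basis_ext[OF cl clS]) (simp_all add: sigma_eqI[OF P(1)] P e22 s22 flip: e_def x_def y_def)
    thus ?thesis using P(1) by blast
  next
    assume yp: "y *v p = 0"
    have yx: "y ** x + x ** y = mat 1" using xy by (simp add: add.commute)
    obtain P where P: "invertible P" "P ** E11 = e ** P" "P ** E12 = y ** P" "P ** E21 = x ** P"
      using construct[OF ee yy xx ex yx p0 ep yp] by blast
    have T: "transp_map E11 = E11" "transp_map E12 = E21" "transp_map E21 = E12" "transp_map E22 = E22"
      by (simp_all add: transp_map_def m2s Es)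
    have "L = sigma P \<circ> transp_map"
      by (rule basis_ext[OF cl cl_comp[OF clS cl_transp]]) (simp_all add: T sigma_eqI[OF P(1)] P e22 s22 flip: e_def x_def y_def)
    thus ?thesis using P(1) by blast
  qed
qed

lemma scC: "r *\<^sub>R (z::complex) = complex_of_real r * z" by (simp add: scaleR_conv_of_real)

lemma mneg: "(A::mat2) ** (- B) = - (A ** B)" "(- A) ** (B::mat2) = - (A ** B)"
  by (simp_all add: m2s)

lemma bl_line: "bounded_linear (\<lambda>s::complex. cscale s D)"
proof -
  have "linear (\<lambda>s::complex. cscale s D)"
    by (rule linearI) (simp_all add: vec_eq_iff cscale_def scR algebra_simps scC)
  thus ?thesis using linear_conv_bounded_linear by blast
qed

lemma bl_entry: "bounded_linear (\<lambda>X::mat2. X $ i $ j)"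
  by (rule bounded_linear_compose[OF bounded_linear_vec_nth bounded_linear_vec_nth])

lemma line_deriv:
  assumes "(h has_derivative L) (at (A + cscale t D))" "complex_linear L"
  shows "((\<lambda>t. h (A + cscale t D) $ i $ j) has_field_derivative (L D $ i $ j)) (at t)"
proof -
  have l: "((\<lambda>t. A + cscale t D) has_derivative (\<lambda>s. cscale s D)) (at t)"
    using has_derivative_add[OF has_derivative_const bounded_linear_imp_has_derivative[OF bl_line, of D]]
    by simp
  have c: "((\<lambda>t. h (A + cscale t D)) has_derivative (\<lambda>s. L (cscale s D))) (at t)"
    by (rule has_derivative_compose[OF l assms(1)])
  have e: "((\<lambda>t. h (A + cscale t D) $ i $ j) has_derivative (\<lambda>s. L (cscale s D) $ i $ j)) (at t)"
    by (rule bounded_linear.has_derivative[OF bl_entry c])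
  have "(\<lambda>s. L (cscale s D) $ i $ j) = (\<lambda>s. (L D $ i $ j) * s)"
    using cl_scale[OF assms(2)] by (simp add: fun_eq_iff cscale_def mult.commute)
  thus ?thesis using e by (simp add: has_field_derivative_def)
qed

lemma holo_line:
  assumes "holo_mat h"
  shows "(\<lambda>t. h (A + cscale t D) $ i $ j) holomorphic_on UNIV"
proof -
  have "(\<lambda>t. h (A + cscale t D) $ i $ j) field_differentiable (at t)" for t
  proof -
    obtain L where "complex_linear L" "(h has_derivative L) (at (A + cscale t D))"
      using assms unfolding holo_mat_def by blast
    thus ?thesis using line_deriv field_differentiable_def by blast
  qed
  thus ?thesis by (simp add: holomorphic_on_def field_differentiable_at_within)
qed

lemma compX2: "fps_nth (F oo fps_X ^ 2) n = (if even n then fps_nth F (n div 2) else (0::complex))"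
proof -
  have "fps_nth (F oo fps_X ^ 2) n = (\<Sum>i\<in>{0..n}. fps_nth F i * (if n = 2 * i then 1 else 0))"
    by (simp add: fps_compose_nth power_mult[symmetric])
  also have "\<dots> = (if even n then fps_nth F (n div 2) else 0)"
  proof (cases "even n")
    case True
    then obtain m where m: "n = 2 * m" by blast
    have "(\<Sum>i\<in>{0..n}. fps_nth F i * (if n = 2 * i then 1 else 0)) = (\<Sum>i\<in>{0..n}. if i = m then fps_nth F i else 0)"
      by (rule sum.cong) (auto simp: m)
    also have "\<dots> = fps_nth F m" using m by simp
    finally show ?thesis using m by simp
  next
    case False
    hence "n \<noteq> 2 * i" for i by auto
    thus ?thesis using False by simp
  qed
  finally show ?thesis .
qed

definition Gd :: "mat2 \<Rightarrow> bool" where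
  "Gd N \<longleftrightarrow> det2 N \<noteq> 0 \<and> (tr2 N)^2 / det2 N \<notin> complex_of_real ` {0..4}"

lemma sq_real: assumes "(z::complex)^2 = complex_of_real r" "r \<ge> 0"
  shows "z = complex_of_real (sqrt r) \<or> z = - complex_of_real (sqrt r)"
proof -
  have "z^2 = (complex_of_real (sqrt r))^2" using assms by (simp flip: of_real_power)
  thus ?thesis by (simp add: power2_eq_iff)
qed

lemma Gd_sq: assumes "Gd N" shows "Gd (N ** N)"
proof -
  define d where "d = det2 N"
  define t where "t = tr2 N"
  have d0: "d \<noteq> 0" using assms d_def Gd_def by simp
  have dd: "det2 (N ** N) = d^2" unfolding d_def det2_def by (simp add: m2s power2_eq_square algebra_simps)
  have tt: "tr2 (N ** N) = t^2 - 2*d" unfolding d_def t_def det2_def tr2_def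
    by (simp add: m2s power2_eq_square algebra_simps)
  define q where "q = t^2/d"
  have qn: "q \<notin> complex_of_real ` {0..4}" using assms unfolding Gd_def q_def t_def d_def by simp
  have e: "tr2 (N ** N)^2 / det2 (N ** N) = (q - 2)^2"
    unfolding dd tt q_def using d0 by (simp add: field_simps power2_eq_square)
  have "(q - 2)^2 \<notin> complex_of_real ` {0..4}"
  proof
    assume "(q - 2)^2 \<in> complex_of_real ` {0..4}"
    then obtain r where r: "(q - 2)^2 = complex_of_real r" "0 \<le> r" "r \<le> 4" by auto
    have s: "sqrt r \<le> 2" using r real_sqrt_le_mono[of r 4] by simp
    have s0: "0 \<le> sqrt r" using r(2) by simp
    have b: "0 \<le> 2 + sqrt r" "2 + sqrt r \<le> 4" "0 \<le> 2 - sqrt r" "2 - sqrt r \<le> 4" using s s0 by linarith+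
    from sq_real[OF r(1,2)] have "q = complex_of_real (2 + sqrt r) \<or> q = complex_of_real (2 - sqrt r)"
      by (auto simp: algebra_simps)
    moreover have "2 + sqrt r \<in> {0..4}" "2 - sqrt r \<in> {0..4}" using b by auto
    ultimately show False using qn by blast
  qed
  thus ?thesis unfolding Gd_def using dd d0 e by simp
qed

lemma sylv: assumes "Gd N" "N ** C + C ** N = 0" shows "C = 0"
proof -
  define d where "d = det2 N"
  define t where "t = tr2 N"
  have d0: "d \<noteq> 0" using assms d_def Gd_def by simp
  have t0: "t \<noteq> 0"
  proof
    assume "t = 0"
    hence "(tr2 N)^2 / det2 N = complex_of_real 0" by (simp add: t_def)
    thus False using assms(1) unfolding Gd_def by force
  qed
  have nc: "N ** C = - (C ** N)" using assms(2) by (simp add: eq_neg_iff_add_eq_0)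
  have ch: "N ** N = cscale t N - cscale d (mat 1)" unfolding t_def d_def det2_def tr2_def
    by (simp add: m2s algebra_simps)
  have "(N ** N) ** C = C ** (N ** N)"
  proof -
    have "(N ** N) ** C = N ** (N ** C)" by (simp add: matrix_mul_assoc)
    also have "\<dots> = - (N ** C ** N)" by (simp add: nc mneg matrix_mul_assoc)
    also have "\<dots> = C ** N ** N" by (simp add: nc mneg)
    finally show ?thesis by (simp add: matrix_mul_assoc)
  qed
  hence "cscale t (N ** C - C ** N) = 0" unfolding ch by (simp add: mdiff cs_mult)
  hence "N ** C - C ** N = 0" using t0 by (simp add: m2s)
  hence "N ** C = C ** N" by simp
  hence "N ** C + N ** C = 0" using nc by simp
  hence "(N ** C)$i$j + (N ** C)$i$j = 0" for i j by (metis vector_add_component zero_index)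
  hence "(N ** C)$i$j = 0" for i j by (metis add_cancel_right_left mult_2 mult_eq_0_iff zero_neq_numeral)
  hence z: "N ** C = 0" by (simp add: vec_eq_iff)
  define A :: mat2 where "A = (\<chi> i j. if i = 1 \<and> j = 1 then N$2$2 else if i = 1 \<and> j = 2 then -N$1$2
        else if i = 2 \<and> j = 1 then -N$2$1 else N$1$1)"
  have "A ** N = cscale d (mat 1)" unfolding A_def d_def det2_def by (simp add: m2s algebra_simps)
  hence "cscale d C = A ** N ** C" by (simp add: cs_mult)
  also have "\<dots> = A ** (N ** C)" by (simp add: matrix_mul_assoc)
  also have "\<dots> = 0" unfolding z by (simp add: m2s)
  finally have "cscale d C = 0" .
  thus ?thesis using d0 by (simp add: m2s)
qed


lemma sum01: "(\<Sum>l\<in>{0..1::nat}. f l) = f 0 + f 1"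
  by (simp add: atLeast0_atMost_Suc ac_simps)
lemma sum02: "(\<Sum>l\<in>{0..2::nat}. f l) = f 0 + f 1 + f 2"
  by (simp add: atLeast0_atMost_Suc numeral_2_eq_2 ac_simps)

lemma cs0: "cscale 0 M = 0" "cscale 1 M = M" by (simp_all add: cscale_def vec_eq_iff)

lemma mzero: "(0::mat2) ** A = 0" "A ** (0::mat2) = 0" by (simp_all add: m2s)

lemma self_add_zero: "(X::mat2) + X = 0 \<Longrightarrow> X = 0"
proof -
  assume h: "X + X = 0"
  hence "X$i$j + X$i$j = 0" for i j by (metis vector_add_component zero_index)
  hence "X$i$j = 0" for i j by (metis add_cancel_right_left mult_2 mult_eq_0_iff zero_neq_numeral)
  thus "X = 0" by (simp add: vec_eq_iff)
qed

lemma main: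
  assumes gA: "g \<in> Aut_Phi"
  shows "\<exists>P. invertible P \<and> (g = sigma P \<or> g = sigma P \<circ> transp_map)"
proof -
  have hg: "holo_mat g" and hi: "holo_mat (inv g)" and bg: "bij g"
    using gA unfolding Aut_Phi_def holo_aut_def by auto
  have comm: "g (M ** M) = g M ** g M" for M
    using gA unfolding Aut_Phi_def Phi_Id_def by (auto simp: fun_eq_iff)
  obtain L0 where cl0: "complex_linear L0" and d0: "(g has_derivative L0) (at 0)"
    using hg unfolding holo_mat_def by blast
  have surj0: "\<exists>X. L0 X = Y" for Y
  proof -
    obtain L' where dL': "(inv g has_derivative L') (at (g 0))"
      using hi unfolding holo_mat_def by blast
    have ig: "inv g (g 0) = 0" using bg by (simp add: bij_def inv_f_f)
    have d0': "(g has_derivative L0) (at (inv g (g 0)))" using d0 ig by simp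
    have c: "((\<lambda>x. g (inv g x)) has_derivative (\<lambda>x. L0 (L' x))) (at (g 0))"
      by (rule has_derivative_compose[OF dL' d0'])
    have "(\<lambda>x. g (inv g x)) = (\<lambda>x. x)" using bg by (simp add: fun_eq_iff bij_def surj_f_inv_f)
    hence "((\<lambda>x. g (inv g x)) has_derivative (\<lambda>x. x)) (at (g 0))" by (simp add: has_derivative_ident)
    hence "(\<lambda>x. L0 (L' x)) = (\<lambda>x. x)" using c has_derivative_unique by blast
    hence "L0 (L' Y) = Y" by (metis)
    thus ?thesis by blast
  qed
  define f where "f M i j = (\<lambda>t. g (cscale t M) $ i $ j)" for M i j
  have fe: "f M i j = (\<lambda>t. g (0 + cscale t M) $ i $ j)" for M i j by (simp add: f_def)
  have holo: "f M i j holomorphic_on UNIV" for M i j unfolding fe by (rule holo_line[OF hg])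
  define F where "F M i j = fps_expansion (f M i j) 0" for M i j
  have exp: "f M i j has_fps_expansion F M i j" for M i j
    unfolding F_def by (rule has_fps_expansion_fps_expansion[OF open_UNIV _ holo]) simp
  define c where "c n M = (\<chi> i j. fps_nth (F M i j) n)" for n M
  have c0: "c 0 M = g 0" for M
  proof -
    have "fps_nth (F M i j) 0 = g 0 $ i $ j" for i j
      using has_fps_expansion_imp_0_eq_fps_nth_0[OF exp[of M i j]] by (simp add: f_def cs0)
    thus ?thesis by (simp add: c_def vec_eq_iff)
  qed
  have c1: "c 1 M = L0 M" for M
  proof -
    have "fps_nth (F M i j) 1 = L0 M $ i $ j" for i j
    proof -
      have d: "(g has_derivative L0) (at (0 + cscale 0 M))" using d0 by (simp add: cs0)
      have "((\<lambda>t. g (0 + cscale t M) $ i $ j) has_field_derivative (L0 M $ i $ j)) (at 0)"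
        by (rule line_deriv[OF d cl0])
      hence "deriv (f M i j) 0 = L0 M $ i $ j" unfolding fe by (rule DERIV_imp_deriv)
      thus ?thesis using fps_nth_fps_expansion[OF exp[of M i j], of 1] by simp
    qed
    thus ?thesis by (simp add: c_def vec_eq_iff)
  qed
  have key: "(if even n then c (n div 2) (M ** M) else 0) = (\<Sum>l\<in>{0..n}. c l M ** c (n - l) M)" for n M
  proof -
    have "(if even n then c (n div 2) (M ** M) else 0) $ i $ j = (\<Sum>l\<in>{0..n}. c l M ** c (n - l) M) $ i $ j" for i j
    proof -
      have fq: "f (M ** M) i j \<circ> (\<lambda>t. t ^ 2) = (\<lambda>t. \<Sum>k\<in>UNIV. f M i k t * f M k j t)"
      proof
        fix t :: complex
        have "cscale (t^2) (M ** M) = cscale t M ** cscale t M" by (simp add: m2s power2_eq_square algebra_simps)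
        hence "g (cscale (t^2) (M ** M)) = g (cscale t M) ** g (cscale t M)" by (simp add: comm)
        thus "(f (M ** M) i j \<circ> (\<lambda>t. t ^ 2)) t = (\<Sum>k\<in>UNIV. f M i k t * f M k j t)"
          by (simp add: f_def matrix_matrix_mult_def)
      qed
      have e1: "(f (M ** M) i j \<circ> (\<lambda>t. t ^ 2)) has_fps_expansion (F (M ** M) i j oo fps_X ^ 2)"
        by (rule has_fps_expansion_compose[OF exp has_fps_expansion_fps_X_power]) simp
      have e2: "(\<lambda>t. \<Sum>k\<in>UNIV. f M i k t * f M k j t) has_fps_expansion (\<Sum>k\<in>UNIV. F M i k * F M k j)"
        by (intro has_fps_expansion_sum has_fps_expansion_mult exp)
      have u: "F (M ** M) i j oo fps_X ^ 2 = (\<Sum>k\<in>UNIV. F M i k * F M k j)"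
        using fps_expansion_unique_complex[OF e1] e2 fq by simp
      have "(if even n then fps_nth (F (M ** M) i j) (n div 2) else 0) =
            (\<Sum>k\<in>UNIV. \<Sum>l\<in>{0..n}. fps_nth (F M i k) l * fps_nth (F M k j) (n - l))"
        using arg_cong[OF u, of "\<lambda>G. fps_nth G n"] by (simp add: compX2 fps_sum_nth fps_mult_nth)
      also have "\<dots> = (\<Sum>l\<in>{0..n}. \<Sum>k\<in>UNIV. fps_nth (F M i k) l * fps_nth (F M k j) (n - l))"
        by (rule sum.swap)
      finally have r: "(if even n then fps_nth (F (M ** M) i j) (n div 2) else 0) =
          (\<Sum>l\<in>{0..n}. \<Sum>k\<in>UNIV. fps_nth (F M i k) l * fps_nth (F M k j) (n - l))" .
      have le: "(if even n then c (n div 2) (M ** M) else 0) $ i $ j = (if even n then fps_nth (F (M ** M) i j) (n div 2) else 0)"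
        by (simp add: c_def)
      have re: "(\<Sum>l\<in>{0..n}. c l M ** c (n - l) M) $ i $ j = (\<Sum>l\<in>{0..n}. \<Sum>k\<in>UNIV. fps_nth (F M i k) l * fps_nth (F M k j) (n - l))"
        by (simp add: c_def matrix_matrix_mult_def)
      show ?thesis using r le re by simp
    qed
    thus ?thesis by (simp add: vec_eq_iff)
  qed
  have g0: "g 0 = 0"
  proof -
    obtain M where M: "L0 M = mat 1" using surj0 by blast
    have "(0::mat2) = (\<Sum>l\<in>{0..1}. c l M ** c (1 - l) M)" using key[of 1 M] by simp
    also have "\<dots> = c 0 M ** c 1 M + c 1 M ** c 0 M" by (simp add: sum01)
    also have "\<dots> = g 0 + g 0" by (simp only: c0 c1 M matrix_mul_rid matrix_mul_lid)
    finally show ?thesis using self_add_zero by metis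
  qed
  have c0': "c 0 M = 0" for M using c0 g0 by simp
  have c1S: "c (Suc 0) M = L0 M" for M using c1[of M] by simp
  have jord: "L0 (M ** M) = L0 M ** L0 M" for M
    using key[of 2 M] by (simp add: sum02 c0' c1S mzero)
  have ind: "\<forall>M. Gd (L0 M) \<longrightarrow> c n M = 0" if "n \<ge> 2" for n
    using that
  proof (induction n rule: less_induct)
    case (less n)
    show ?case
    proof (intro allI impI)
      fix M assume GM: "Gd (L0 M)"
      have IH: "c l M' = 0" if "2 \<le> l" "l < n" "Gd (L0 M')" for l M'
        using less.IH that by blast
      have lhs: "(if even (Suc n) then c (Suc n div 2) (M ** M) else 0) = 0"
      proof (cases "even (Suc n)")
        case True
        have "n \<noteq> 2" using True by auto
        hence "3 \<le> n" using less.prems by simp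
        hence "2 \<le> Suc n div 2" "Suc n div 2 < n" by auto
        moreover have "Gd (L0 (M ** M))" using Gd_sq[OF GM] jord by simp
        ultimately show ?thesis using IH True by simp
      qed simp
      have trm: "c l M ** c (Suc n - l) M = (if l = 1 then L0 M ** c n M else 0) + (if l = n then c n M ** L0 M else 0)"
        if lm: "l \<in> {0..Suc n}" for l
      proof -
        have lle: "l \<le> Suc n" using lm by simp
        consider "l = 0" | "l = 1" | "l = n" | "l = Suc n" | "2 \<le> l" "l < n" using lle by linarith
        thus ?thesis
        proof cases
          case 1 thus ?thesis using less.prems by (simp add: c0' mzero)
        next
          case 2 thus ?thesis using less.prems by (simp add: c1S)
        next
          case 3 thus ?thesis using less.prems by (simp add: c1S)
        next
          case 4 thus ?thesis using less.prems by (simp add: c0' mzero)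
        next
          case 5 thus ?thesis using less.prems IH[OF 5 GM] by (simp add: mzero)
        qed
      qed
      have "0 = (\<Sum>l\<in>{0..Suc n}. c l M ** c (Suc n - l) M)" using key[of "Suc n" M] lhs by simp
      also have "\<dots> = (\<Sum>l\<in>{0..Suc n}. (if l = 1 then L0 M ** c n M else 0) + (if l = n then c n M ** L0 M else 0))"
        by (rule sum.cong) (simp_all add: trm)
      also have "\<dots> = L0 M ** c n M + c n M ** L0 M"
        using less.prems by (simp add: sum.distrib)
      finally show "c n M = 0" using sylv[OF GM] by metis
    qed
  qed
  have good: "g M = L0 M" if GM: "Gd (L0 M)" for M
  proof -
    have "g M $ i $ j = L0 M $ i $ j" for i j
    proof -
      define a where "a = L0 M $ i $ j"
      have Fe: "F M i j = fps_const a * fps_X"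
      proof (rule fps_ext)
        fix n
        show "fps_nth (F M i j) n = fps_nth (fps_const a * fps_X) n"
        proof -
          consider "n = 0" | "n = 1" | "n \<ge> 2" by linarith
          thus ?thesis
          proof cases
            case 1 thus ?thesis using c0'[of M] by (simp add: c_def vec_eq_iff)
          next
            case 2 thus ?thesis using c1[of M] by (simp add: c_def vec_eq_iff a_def)
          next
            case 3 thus ?thesis using ind[OF 3] GM by (simp add: c_def vec_eq_iff)
          qed
        qed
      qed
      have e2: "(\<lambda>t. a * t) has_fps_expansion fps_const a * fps_X"
        by (rule has_fps_expansion_cmult_left[OF has_fps_expansion_fps_X])
      have "(\<lambda>t. f M i j t - a * t) has_fps_expansion F M i j - fps_const a * fps_X"
        by (rule has_fps_expansion_diff[OF exp e2])
      hence z: "(\<lambda>t. f M i j t - a * t) has_fps_expansion 0" using Fe by simp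
      have "(\<lambda>t. f M i j t - a * t) holomorphic_on UNIV"
        by (intro holomorphic_intros holo)
      hence "f M i j 1 - a * 1 = 0"
        using has_fps_expansion_0_analytic_continuation[OF z _ open_UNIV connected_UNIV] by blast
      thus ?thesis by (simp add: f_def a_def cs0)
    qed
    thus ?thesis by (simp add: vec_eq_iff)
  qed
  define D0 :: mat2 where "D0 = E11 + cscale 2 E22"
  have GD0: "Gd D0"
  proof -
    have dt: "det2 D0 = 2" "tr2 D0 = 3" by (simp_all add: D0_def det2_def tr2_def Es cscale_def)
    have "(3::complex)^2 / 2 \<notin> complex_of_real ` {0..4}"
    proof
      assume "(3::complex)^2 / 2 \<in> complex_of_real ` {0..4}"
      then obtain r where r: "(3::complex)^2/2 = complex_of_real r" "r \<le> 4" by auto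
      have "complex_of_real r = complex_of_real (9/2)" using r(1) by simp
      hence "r = 9/2" using of_real_eq_iff by blast
      thus False using r(2) by simp
    qed
    thus ?thesis unfolding Gd_def dt by simp
  qed
  obtain N1 where N1: "L0 N1 = D0" using surj0 by blast
  have ext: "g M = L0 M" for M
  proof -
    define W where "W = N1 - M"
    define Q where "Q t = L0 M + cscale t (L0 W)" for t
    have LQ: "L0 (M + cscale t W) = Q t" for t by (simp add: Q_def cl_add[OF cl0] cl_scale[OF cl0])
    define S where "S = {t. Gd (Q t)}"
    define dd where "dd t = det2 (Q t)" for t
    define tt where "tt t = tr2 (Q t)" for t
    have cdd: "continuous_on UNIV dd" unfolding dd_def Q_def det2_def cscale_def
      by (simp add: continuous_intros)
    have ctt: "continuous_on UNIV tt" unfolding tt_def Q_def tr2_def cscale_def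
      by (simp add: continuous_intros)
    define K where "K = complex_of_real ` {0..4}"
    have "compact K" unfolding K_def
      by (intro compact_continuous_image continuous_intros compact_Icc)
    hence oK: "open (- K)" by (simp add: compact_imp_closed open_Compl)
    have oD: "open {t. dd t \<noteq> 0}" by (rule open_Collect_neq[OF cdd continuous_on_const])
    have cq: "continuous_on {t. dd t \<noteq> 0} (\<lambda>t. tt t ^ 2 / dd t)"
      by (intro continuous_intros continuous_on_subset[OF ctt] continuous_on_subset[OF cdd]) auto
    have Se: "S = {t. dd t \<noteq> 0} \<inter> (\<lambda>t. tt t ^ 2 / dd t) -` (- K)"
      by (auto simp: S_def Gd_def dd_def tt_def K_def)
    have oS: "open S" unfolding Se by (rule continuous_open_preimage[OF cq oD oK])
    have S1: "1 \<in> S" using GD0 N1 LQ[of 1] by (simp add: S_def W_def cs0)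
    have "g (M + cscale t W) $ i $ j = L0 (M + cscale t W) $ i $ j" if "t \<in> S" for t i j
      using good[of "M + cscale t W"] that by (simp add: LQ S_def)
    hence h: "\<And>t. t \<in> S \<Longrightarrow> g (M + cscale t W) $ i $ j - L0 (M + cscale t W) $ i $ j = 0" for i j by simp
    have "g (M + cscale 0 W) $ i $ j - L0 (M + cscale 0 W) $ i $ j = 0" for i j
    proof -
      have ho: "(\<lambda>t. g (M + cscale t W) $ i $ j - L0 (M + cscale t W) $ i $ j) holomorphic_on UNIV"
        by (intro holomorphic_intros holo_line hg cl_holo cl0)
      have ne: "S \<noteq> {}" using S1 by blast
      show ?thesis
        using analytic_continuation_open[OF oS open_UNIV ne connected_UNIV subset_UNIV ho holomorphic_on_const, of 0 0] h
        by auto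
    qed
    hence "g M $ i $ j = L0 M $ i $ j" for i j by (simp add: cs0)
    thus ?thesis by (simp add: vec_eq_iff)
  qed
  have gL: "g = L0" using ext by blast
  show ?thesis
    by (rule jordan_class) (use cl0 bg jord gL in auto)
qed

theorem proposition3p9:
  shows "Aut_Phi = {sigma P | P. invertible P} \<union> {sigma P \<circ> transp_map | P. invertible P}
    \<and> (\<forall>P. invertible P \<longrightarrow> (sigma P = id \<longleftrightarrow> (\<exists>c. c \<noteq> 0 \<and> P = cscale c (mat 1))))
    \<and> (\<forall>P. invertible P \<longrightarrow> transp_map \<noteq> sigma P)"
proof -
  have "Aut_Phi = {sigma P | P. invertible P} \<union> {sigma P \<circ> transp_map | P. invertible P}"
  proof
    show "Aut_Phi \<subseteq> {sigma P | P. invertible P} \<union> {sigma P \<circ> transp_map | P. invertible P}"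
    proof
      fix g assume "g \<in> Aut_Phi"
      from main[OF this] show "g \<in> {sigma P | P. invertible P} \<union> {sigma P \<circ> transp_map | P. invertible P}"
        by blast
    qed
    show "{sigma P | P. invertible P} \<union> {sigma P \<circ> transp_map | P. invertible P} \<subseteq> Aut_Phi"
      using sigma_in sigmaT_in by blast
  qed
  thus ?thesis using sigma_id_iff transp_ne by blast
qed

end
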